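(* Let $y_1, \ldots, y_n \in \mathfrak m$ be a minimal system of generators of $\mathfrak m$, so $R = k[[y_1, \ldots, y_n]]$, and let $\widetilde y_1, \ldots, \widetilde y_n \in R$ be elements with $y_i \equiv \widetilde y_i \pmod{t^{a_n+1}}$ (i.e. $v(y_i - \widetilde y_i) \ge a_n + 1$) for all $i$. Then $R = k[[\widetilde y_1, \ldots, \widetilde y_n]]$.
   Context: Let $k$ be a field and let $(R,\mathfrak m)$ be a complete local noetherian domain of dimension $1$ containing $k$ with $R/\mathfrak m = k$, with normalization $\overline R$ having residue field $k$, so $\overline R = k[[t]]$ and $R \subseteq k[[t]]$ is finite birational. Let $v$ be the $t$-adic valuation, $v(0)=\infty$. For $A \subseteq k((t))$ let $v(A) = \{v(f): f\in A\setminus\{0\}\}$. The Herzog–Kunz sequence of $R$ is $v(\mathfrak m)\setminus v(\mathfrak m^2)$ listed increasingly as $a_1 < \cdots < a_n$ (with $n = \mathrm{edim}(R)$). For $y_i\in\mathfrak m$, $k[[y_1,\ldots,y_n]]$ is the image of $k[[Y_1,\ldots,Y_n]]\to k[[t]]$, $Y_i\mapsto y_i$. *)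

theory Defs
  imports "HOL-Computational_Algebra.Formal_Power_Series"
begin

text \<open>k[[t]] is modelled as the type 'a fps over a field 'a; the t-adic valuation
  of a nonzero series is subdegree.\<close>

definition val_set :: "'a::zero fps set \<Rightarrow> nat set" where
  "val_set A = {subdegree f | f. f \<in> A \<and> f \<noteq> 0}"

definition k_subalgebra :: "'a::field fps set \<Rightarrow> bool" where
  "k_subalgebra R \<longleftrightarrow> (\<forall>c. fps_const c \<in> R) \<and>
     (\<forall>f\<in>R. \<forall>g\<in>R. f + g \<in> R \<and> f * g \<in> R \<and> - f \<in> R)"

definition fps_finite_over :: "'a::field fps set \<Rightarrow> bool" where
  "fps_finite_over R \<longleftrightarrow> (\<exists>(N::nat) g. \<forall>f. \<exists>r. (\<forall>j<N. r j \<in> R) \<and> f = (\<Sum>j<N. r j * g j))"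

text \<open>R \<subseteq> k[[t]] is birational: same fraction field.\<close>
definition fps_birational :: "'a::field fps set \<Rightarrow> bool" where
  "fps_birational R \<longleftrightarrow> (\<forall>f. \<exists>a\<in>R. \<exists>b\<in>R. b \<noteq> 0 \<and> f * b = a)"

definition max_ideal :: "'a::field fps set \<Rightarrow> 'a fps set" where
  "max_ideal R = {f \<in> R. fps_nth f 0 = 0}"

definition ideal_sq :: "'a::field fps set \<Rightarrow> 'a fps set" where
  "ideal_sq M = {f. \<exists>(N::nat) a b. (\<forall>j<N. a j \<in> M \<and> b j \<in> M) \<and> f = (\<Sum>j<N. a j * b j)}"

definition generates :: "'a::field fps set \<Rightarrow> 'a fps set \<Rightarrow> nat \<Rightarrow> (nat \<Rightarrow> 'a fps) \<Rightarrow> bool" where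
  "generates R M n y \<longleftrightarrow> (\<forall>i<n. y i \<in> M) \<and>
     (\<forall>f\<in>M. \<exists>r. (\<forall>i<n. r i \<in> R) \<and> f = (\<Sum>i<n. r i * y i))"

definition minimal_generators :: "'a::field fps set \<Rightarrow> 'a fps set \<Rightarrow> nat \<Rightarrow> (nat \<Rightarrow> 'a fps) \<Rightarrow> bool" where
  "minimal_generators R M n y \<longleftrightarrow> generates R M n y \<and>
     (\<forall>n' z. generates R M n' z \<longrightarrow> n \<le> n')"

text \<open>Herzog--Kunz set v(m) minus v(m^2); its maximum is a_n.\<close>
definition HK_set :: "'a::field fps set \<Rightarrow> nat set" where
  "HK_set R = val_set (max_ideal R) - val_set (ideal_sq (max_ideal R))"

text \<open>Image of the substitution map k[[Y_0..Y_{n-1}]] \<rightarrow> k[[t]], Y_i \<mapsto> y i, for y i of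
  positive order.  A power series in n variables is a coefficient function c on
  exponent vectors alpha (only those supported in {..<n} matter); the t^m coefficient of
  sum c(alpha) y^alpha only involves |alpha| \<le> m.\<close>
definition psubst :: "nat \<Rightarrow> (nat \<Rightarrow> 'a::field fps) \<Rightarrow> ((nat \<Rightarrow> nat) \<Rightarrow> 'a) \<Rightarrow> 'a fps" where
  "psubst n y c = Abs_fps (\<lambda>m. \<Sum>\<alpha>\<in>{\<alpha>. (\<forall>i. n \<le> i \<longrightarrow> \<alpha> i = 0) \<and> (\<Sum>i<n. \<alpha> i) \<le> m}.
       c \<alpha> * fps_nth (\<Prod>i<n. y i ^ \<alpha> i) m)"

definition power_series_subalg :: "nat \<Rightarrow> (nat \<Rightarrow> 'a::field fps) \<Rightarrow> 'a fps set" where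
  "power_series_subalg n y = range (psubst n y)"

end

theory Submission
  imports Defs
begin
unbundle fps_syntax


definition lowz :: "nat \<Rightarrow> 'a::field fps \<Rightarrow> bool" where
  "lowz j f \<longleftrightarrow> (\<forall>k<j. f $ k = 0)"

lemma lowz_add: "lowz j f \<Longrightarrow> lowz j g \<Longrightarrow> lowz j (f + g)"
  by (simp add: lowz_def)
lemma lowz_diff: "lowz j f \<Longrightarrow> lowz j g \<Longrightarrow> lowz j (f - g)"
  by (simp add: lowz_def)
lemma lowz_0[simp]: "lowz j 0" by (simp add: lowz_def)
lemma lowz_zero[simp]: "lowz 0 f" by (simp add: lowz_def)
lemma lowz_mono: "lowz j f \<Longrightarrow> i \<le> j \<Longrightarrow> lowz i f" by (simp add: lowz_def)
lemma lowz_sum: "finite S \<Longrightarrow> (\<And>k. k \<in> S \<Longrightarrow> lowz j (h k)) \<Longrightarrow> lowz j (\<Sum>k\<in>S. h k)"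
  by (induction S rule: finite_induct) (auto intro: lowz_add)
lemma lowz_mult: assumes "lowz a f" "lowz b g" shows "lowz (a + b) (f * g)"
  unfolding lowz_def
proof (intro allI impI)
  fix k assume k: "k < a + b"
  have hz: "f $ i * g $ (k - i) = 0" if "i \<in> {0..k}" for i
  proof (cases "i < a")
    case True then show ?thesis using assms(1) by (simp add: lowz_def)
  next
    case False then have "k - i < b" using k that by auto
    then show ?thesis using assms(2) by (simp add: lowz_def)
  qed
  show "(f * g) $ k = 0" unfolding fps_mult_nth by (rule sum.neutral) (use hz in blast)
qed
lemma lowz_1: "f $ 0 = 0 \<Longrightarrow> lowz 1 f" by (simp add: lowz_def)
lemma lowz_mult1: "f $ 0 = 0 \<Longrightarrow> lowz j g \<Longrightarrow> lowz (Suc j) (f * g)"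
  using lowz_mult[of 1 f j g] by (simp add: lowz_def)
lemma lowz_prod_list: "(\<And>x. x \<in> set w \<Longrightarrow> z x $ 0 = 0) \<Longrightarrow> lowz (length w) (prod_list (map z w))"
proof (induction w)
  case Nil then show ?case by simp
next
  case (Cons a w) then show ?case using lowz_mult1[of "z a"] by auto
qed
lemma lowz_subdegree: "lowz j f \<Longrightarrow> f \<noteq> 0 \<Longrightarrow> j \<le> subdegree f"
  unfolding lowz_def by (metis not_le nth_subdegree_nonzero)
lemma subdegree_lowz: "j \<le> subdegree f \<Longrightarrow> lowz j f"
  unfolding lowz_def using nth_less_subdegree_zero by (metis order_less_le_trans)
lemma lowz_dvd: assumes "b \<noteq> 0" "lowz (subdegree b) h" shows "b dvd h"
proof (cases "h = 0")
  case False
  then show ?thesis using assms fps_dvd_iff lowz_subdegree by blast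
qed simp

lemma sa_const: "k_subalgebra R \<Longrightarrow> fps_const c \<in> R" by (simp add: k_subalgebra_def)
lemma sa_0: "k_subalgebra R \<Longrightarrow> 0 \<in> R" using sa_const[of R 0] by simp
lemma sa_1: "k_subalgebra R \<Longrightarrow> 1 \<in> R" using sa_const[of R 1] by simp
lemma sa_add: "k_subalgebra R \<Longrightarrow> f \<in> R \<Longrightarrow> g \<in> R \<Longrightarrow> f + g \<in> R" by (simp add: k_subalgebra_def)
lemma sa_mult: "k_subalgebra R \<Longrightarrow> f \<in> R \<Longrightarrow> g \<in> R \<Longrightarrow> f * g \<in> R" by (simp add: k_subalgebra_def)
lemma sa_uminus: "k_subalgebra R \<Longrightarrow> f \<in> R \<Longrightarrow> - f \<in> R" by (simp add: k_subalgebra_def)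
lemma sa_diff: "k_subalgebra R \<Longrightarrow> f \<in> R \<Longrightarrow> g \<in> R \<Longrightarrow> f - g \<in> R"
  using sa_add[of R f "-g"] sa_uminus by fastforce
lemma sa_sum: "k_subalgebra R \<Longrightarrow> (\<And>k. k \<in> S \<Longrightarrow> h k \<in> R) \<Longrightarrow> (\<Sum>k\<in>S. h k) \<in> R"
proof (induction S rule: infinite_finite_induct)
  case (infinite A) then show ?case by (simp add: sa_0)
next
  case empty then show ?case by (simp add: sa_0)
next
  case (insert x F) then show ?case by (simp add: sa_add)
qed
lemma sa_prod: "k_subalgebra R \<Longrightarrow> (\<And>k. k \<in> S \<Longrightarrow> h k \<in> R) \<Longrightarrow> (\<Prod>k\<in>S. h k) \<in> R"
proof (induction S rule: infinite_finite_induct)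
  case (infinite A) then show ?case by (simp add: sa_1)
next
  case empty then show ?case by (simp add: sa_1)
next
  case (insert x F) then show ?case by (simp add: sa_mult)
qed
lemma sa_power: "k_subalgebra R \<Longrightarrow> f \<in> R \<Longrightarrow> f ^ m \<in> R"
  by (induction m) (auto simp: sa_1 sa_mult)
lemma sa_prod_list: "k_subalgebra R \<Longrightarrow> (\<And>x. x \<in> set w \<Longrightarrow> z x \<in> R) \<Longrightarrow> prod_list (map z w) \<in> R"
  by (induction w) (auto simp: sa_1 sa_mult)

section \<open>conductor\<close>

lemma conductor:
  assumes sa: "k_subalgebra R" and fin: "fps_finite_over R" and bir: "fps_birational R"
  shows "\<exists>C. \<forall>h. lowz C h \<longrightarrow> h \<in> R"
proof -
  have "\<exists>(N::nat) g. \<forall>f. \<exists>r. (\<forall>j<N. r j \<in> R) \<and> f = (\<Sum>j<N. r j * g j)"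
    using fin unfolding fps_finite_over_def .
  then obtain N :: nat and g where Ng: "\<forall>f. \<exists>r. (\<forall>j<N. r j \<in> R) \<and> f = (\<Sum>j<N. r j * g j)"
    by iprover
  have "\<forall>j. \<exists>a b. a \<in> R \<and> b \<in> R \<and> b \<noteq> 0 \<and> g j * b = a"
    using bir unfolding fps_birational_def by blast
  then obtain A B where AB: "\<And>j. A j \<in> R \<and> B j \<in> R \<and> B j \<noteq> 0 \<and> g j * B j = A j"
    by metis
  define b where "b = (\<Prod>j<N. B j)"
  have bnz: "b \<noteq> 0" unfolding b_def using AB by (simp add: prod_zero_iff)
  have bR: "f * b \<in> R" for f
  proof -
    obtain r where r: "\<forall>j<N. r j \<in> R" "f = (\<Sum>j<N. r j * g j)" using Ng by blast
    have "f * b = (\<Sum>j<N. r j * g j * b)" using r(2) by (simp add: sum_distrib_right)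
    also have "\<dots> = (\<Sum>j<N. r j * A j * (\<Prod>i\<in>{..<N} - {j}. B i))"
    proof (rule sum.cong)
      fix j assume "j \<in> {..<N}"
      then have "b = B j * (\<Prod>i\<in>{..<N} - {j}. B i)"
        unfolding b_def by (simp add: prod.remove)
      then show "r j * g j * b = r j * A j * (\<Prod>i\<in>{..<N} - {j}. B i)"
        using AB[of j] by (simp add: mult.assoc[symmetric])
    qed simp
    also have "\<dots> \<in> R" using r(1) AB
      by (intro sa_sum[OF sa] sa_mult[OF sa] sa_prod[OF sa]) auto
    finally show ?thesis .
  qed
  show ?thesis
  proof (intro exI allI impI)
    fix h :: "'a fps" assume "lowz (subdegree b) h"
    then obtain q where "h = b * q" using lowz_dvd[OF bnz] by blast
    then show "h \<in> R" using bR[of q] by (simp add: mult.commute)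
  qed
qed



lemma mi_iff: "f \<in> max_ideal R \<longleftrightarrow> f \<in> R \<and> f $ 0 = 0"
  by (simp add: max_ideal_def)
lemma mi_add: "k_subalgebra R \<Longrightarrow> f \<in> max_ideal R \<Longrightarrow> g \<in> max_ideal R \<Longrightarrow> f + g \<in> max_ideal R"
  by (simp add: mi_iff sa_add)
lemma mi_diff: "k_subalgebra R \<Longrightarrow> f \<in> max_ideal R \<Longrightarrow> g \<in> max_ideal R \<Longrightarrow> f - g \<in> max_ideal R"
  by (simp add: mi_iff sa_diff)
lemma mi_mult: "k_subalgebra R \<Longrightarrow> f \<in> max_ideal R \<Longrightarrow> g \<in> R \<Longrightarrow> f * g \<in> max_ideal R"
  by (simp add: mi_iff sa_mult)
lemma mi_mult': "k_subalgebra R \<Longrightarrow> f \<in> R \<Longrightarrow> g \<in> max_ideal R \<Longrightarrow> f * g \<in> max_ideal R"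
  by (simp add: mi_iff sa_mult)
lemma mi_0: "k_subalgebra R \<Longrightarrow> 0 \<in> max_ideal R"
  by (simp add: mi_iff sa_0)

lemma isq_0: "0 \<in> ideal_sq M"
  unfolding ideal_sq_def by (rule CollectI, rule exI[of _ 0]) simp
lemma isq_add1: assumes "f \<in> ideal_sq M" "a \<in> M" "b \<in> M" shows "f + a * b \<in> ideal_sq M"
proof -
  obtain N :: nat and A B where f: "\<forall>j<N. A j \<in> M \<and> B j \<in> M" "f = (\<Sum>j<N. A j * B j)"
    using assms(1) unfolding ideal_sq_def by blast
  let ?A = "A(N := a)" and ?B = "B(N := b)"
  have "\<forall>j<Suc N. ?A j \<in> M \<and> ?B j \<in> M" using f(1) assms by auto
  moreover have "f + a * b = (\<Sum>j<Suc N. ?A j * ?B j)"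
    using f(2) by (simp add: lessThan_Suc)
  ultimately show ?thesis unfolding ideal_sq_def
    by (intro CollectI exI[of _ "Suc N"] exI[of _ ?A] exI[of _ ?B]) simp
qed
lemma isq_sum_prods: "(\<forall>j<(N::nat). A j \<in> M \<and> B j \<in> M) \<Longrightarrow> f \<in> ideal_sq M \<Longrightarrow> f + (\<Sum>j<N. A j * B j) \<in> ideal_sq M"
proof (induction N)
  case 0 then show ?case by simp
next
  case (Suc N)
  then have "f + (\<Sum>j<N. A j * B j) + A N * B N \<in> ideal_sq M"
    by (intro isq_add1) auto
  then show ?case by (simp add: add.assoc)
qed
lemma isq_add: assumes "f \<in> ideal_sq M" "g \<in> ideal_sq M" shows "f + g \<in> ideal_sq M"
proof -
  obtain N :: nat and A B where g: "\<forall>j<N. A j \<in> M \<and> B j \<in> M" "g = (\<Sum>j<N. A j * B j)"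
    using assms(2) unfolding ideal_sq_def by blast
  show ?thesis using isq_sum_prods[OF g(1) assms(1)] g(2) by simp
qed
lemma isq_prod: "a \<in> M \<Longrightarrow> b \<in> M \<Longrightarrow> a * b \<in> ideal_sq M"
  using isq_add1[OF isq_0] by simp
lemma isq_smult: assumes "f \<in> ideal_sq M" "\<And>a. a \<in> M \<Longrightarrow> fps_const c * a \<in> M"
  shows "fps_const c * f \<in> ideal_sq M"
proof -
  obtain N :: nat and A B where f: "\<forall>j<N. A j \<in> M \<and> B j \<in> M" "f = (\<Sum>j<N. A j * B j)"
    using assms(1) unfolding ideal_sq_def by blast
  have "\<forall>j<N. fps_const c * A j \<in> M \<and> B j \<in> M" using f(1) assms(2) by blast
  moreover have "fps_const c * f = (\<Sum>j<N. (fps_const c * A j) * B j)"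
    unfolding f(2) sum_distrib_left by (simp only: mult.assoc)
  ultimately show ?thesis unfolding ideal_sq_def
    by (intro CollectI exI[of _ N] exI[of _ "\<lambda>j. fps_const c * A j"] exI[of _ B]) simp
qed
lemma isq_sub: assumes sa: "k_subalgebra R" shows "ideal_sq (max_ideal R) \<subseteq> max_ideal R"
proof
  fix f assume "f \<in> ideal_sq (max_ideal R)"
  then obtain N :: nat and A B where f: "\<forall>j<N. A j \<in> max_ideal R \<and> B j \<in> max_ideal R" "f = (\<Sum>j<N. A j * B j)"
    unfolding ideal_sq_def by blast
  have "(\<Sum>j\<in>{..<N}. A j * B j) \<in> max_ideal R"
    using f(1)
  proof (induction N)
    case 0 then show ?case by (simp add: mi_0 sa)
  next
    case (Suc N)
    then have "A N \<in> max_ideal R" "B N \<in> max_ideal R" by auto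
    have "A N * B N \<in> max_ideal R"
      using mi_mult[OF sa \<open>A N \<in> max_ideal R\<close>, of "B N"] \<open>B N \<in> max_ideal R\<close> by (simp add: mi_iff)
    moreover have "(\<Sum>j\<in>{..<N}. A j * B j) \<in> max_ideal R" using Suc by auto
    ultimately show ?case using mi_add[OF sa] by simp
  qed
  then show "f \<in> max_ideal R" using f(2) by simp
qed

lemma val_setI: "f \<in> A \<Longrightarrow> f \<noteq> 0 \<Longrightarrow> subdegree f \<in> val_set A"
  unfolding val_set_def by blast
lemma val_setE: "v \<in> val_set A \<Longrightarrow> \<exists>f\<in>A. f \<noteq> 0 \<and> subdegree f = v"
  unfolding val_set_def by blast

lemma lowz_X_power: "lowz k (fps_X ^ k :: 'a::field fps)"
  by (rule subdegree_lowz) (simp add: fps_X_power_subdegree)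

lemma X_power_mi:
  assumes "\<forall>h. lowz C h \<longrightarrow> h \<in> R" "1 \<le> C" "C \<le> k"
  shows "(fps_X ^ k :: 'a::field fps) \<in> max_ideal R"
proof -
  have "lowz C (fps_X ^ k :: 'a fps)" using lowz_X_power lowz_mono assms(3) by blast
  then show ?thesis using assms unfolding mi_iff lowz_def by auto
qed

lemma lowz_isq:
  assumes sa: "k_subalgebra R" and cond: "\<forall>h. lowz C h \<longrightarrow> h \<in> R" and C1: "1 \<le> C"
    and f: "lowz (2 * C) f"
  shows "f \<in> ideal_sq (max_ideal R)"
proof (cases "f = 0")
  case True then show ?thesis by (simp add: isq_0)
next
  case False
  then have sd: "2 * C \<le> subdegree f" using lowz_subdegree f by blast
  let ?q = "fps_shift C f"
  have eq: "?q * fps_X ^ C = f" using sd by (intro fps_shift_times_fps_X_power) simp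
  have "lowz C ?q" using f unfolding lowz_def by auto
  then have "?q \<in> max_ideal R" using cond C1 unfolding mi_iff lowz_def by auto
  moreover have "fps_X ^ C \<in> max_ideal R" using X_power_mi[OF cond C1] by simp
  ultimately have "?q * fps_X ^ C \<in> ideal_sq (max_ideal R)" by (rule isq_prod)
  then show ?thesis using eq by simp
qed

lemma HK_bound:
  assumes sa: "k_subalgebra R" and cond: "\<forall>h. lowz C h \<longrightarrow> h \<in> R" and C1: "1 \<le> C"
  shows "HK_set R \<subseteq> {..<2*C}"
proof
  fix v assume v: "v \<in> HK_set R"
  show "v \<in> {..<2*C}"
  proof (rule ccontr)
    assume "v \<notin> {..<2*C}"
    then have "lowz (2*C) (fps_X ^ v :: 'a fps)" using lowz_mono[OF lowz_X_power, of "2*C" v] by auto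
    then have "(fps_X ^ v :: 'a fps) \<in> ideal_sq (max_ideal R)" using lowz_isq[OF sa cond C1] by blast
    then have "v \<in> val_set (ideal_sq (max_ideal R))"
      using val_setI[of "fps_X ^ v :: 'a fps"] by (simp add: fps_X_power_subdegree)
    then show False using v unfolding HK_set_def by blast
  qed
qed

lemma HK_isq:
  assumes sa: "k_subalgebra R" and cond: "\<forall>h. lowz C h \<longrightarrow> h \<in> R" and C1: "1 \<le> C"
    and nHK: "\<forall>v. v0 \<le> v \<longrightarrow> v \<notin> HK_set R"
  shows "f \<in> max_ideal R \<Longrightarrow> lowz v0 f \<Longrightarrow> f \<in> ideal_sq (max_ideal R)"
proof -
  have main: "\<forall>f. f \<in> max_ideal R \<longrightarrow> lowz v0 f \<longrightarrow> lowz (2 * C - d) f \<longrightarrow> f \<in> ideal_sq (max_ideal R)" for d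
  proof (induction d)
    case 0 then show ?case using lowz_isq[OF sa cond C1] by auto
  next
    case (Suc d)
    show ?case
    proof (intro allI impI)
      fix f assume fm: "f \<in> max_ideal R" and f0: "lowz v0 f" and fl: "lowz (2 * C - Suc d) f"
      show "f \<in> ideal_sq (max_ideal R)"
      proof (cases "lowz (2 * C - d) f")
        case True then show ?thesis using Suc.IH fm f0 by blast
      next
        case False
        then have fnz: "f \<noteq> 0" by auto
        define v where "v = subdegree f"
        have v1: "2 * C - Suc d \<le> v" using lowz_subdegree[OF fl fnz] v_def by simp
        have v2: "v < 2 * C - d" using False subdegree_lowz v_def not_le by blast
        have vv: "v0 \<le> v" using lowz_subdegree[OF f0 fnz] v_def by simp
        have "v \<in> val_set (max_ideal R)" using val_setI[OF fm fnz] v_def by simp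
        then have "v \<in> val_set (ideal_sq (max_ideal R))" using nHK vv unfolding HK_set_def by blast
        then obtain g where g: "g \<in> ideal_sq (max_ideal R)" "g \<noteq> 0" "subdegree g = v"
          using val_setE by blast
        define c where "c = f $ v / g $ v"
        define h where "h = f - fps_const c * g"
        have gm: "g \<in> max_ideal R" using isq_sub[OF sa] g(1) by blast
        have cg: "fps_const c * g \<in> max_ideal R" using mi_mult'[OF sa _ gm] sa_const[OF sa] by blast
        have hm: "h \<in> max_ideal R" unfolding h_def using mi_diff[OF sa fm cg] .
        have gv: "g $ v \<noteq> 0" using g by auto
        have "h $ k = 0" if "k < Suc v" for k
        proof (cases "k = v")
          case True then show ?thesis unfolding h_def c_def using gv by simp
        next
          case False then have "k < v" using that by simp
          then have "f $ k = 0" "g $ k = 0" using g(3) v_def nth_less_subdegree_zero[of k g] by auto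
          then show ?thesis unfolding h_def by simp
        qed
        then have hl: "lowz (Suc v) h" unfolding lowz_def by blast
        have "2 * C - d \<le> Suc v" using v1 by arith
        then have "lowz (2 * C - d) h" using lowz_mono[OF hl, of "2*C-d"] by simp
        moreover have "lowz v0 h" using lowz_mono[OF hl, of v0] vv by simp
        ultimately have "h \<in> ideal_sq (max_ideal R)" using Suc.IH hm by blast
        moreover have "fps_const c * g \<in> ideal_sq (max_ideal R)"
          using isq_smult[OF g(1)] mi_mult'[OF sa sa_const[OF sa]] by blast
        ultimately have "h + fps_const c * g \<in> ideal_sq (max_ideal R)" by (rule isq_add)
        then show ?thesis unfolding h_def by simp
      qed
    qed
  qed
  then show "f \<in> max_ideal R \<Longrightarrow> lowz v0 f \<Longrightarrow> f \<in> ideal_sq (max_ideal R)"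
    using main[of "2*C"] by simp
qed



definition lspan :: "'a::field fps set \<Rightarrow> nat \<Rightarrow> (nat \<Rightarrow> 'a fps) \<Rightarrow> 'a fps set" where
  "lspan R n z = {f. \<exists>r. (\<forall>i<n. r i \<in> R) \<and> f = (\<Sum>i<n. r i * z i)}"

lemma lspanI: "(\<forall>i<n. r i \<in> R) \<Longrightarrow> (\<Sum>i<n. r i * z i) \<in> lspan R n z"
  unfolding lspan_def by blast
lemma lspanE: "f \<in> lspan R n z \<Longrightarrow> \<exists>r. (\<forall>i<n. r i \<in> R) \<and> f = (\<Sum>i<n. r i * z i)"
  unfolding lspan_def by blast
lemma lspan_0: "k_subalgebra R \<Longrightarrow> 0 \<in> lspan R n z"
  using lspanI[of n "\<lambda>_. 0" R z] sa_0[of R] by auto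
lemma lspan_add: assumes sa: "k_subalgebra R" and "f \<in> lspan R n z" "g \<in> lspan R n z"
  shows "f + g \<in> lspan R n z"
proof -
  obtain r where "\<forall>i<n. r i \<in> R" "f = (\<Sum>i<n. r i * z i)"
    using assms(2) lspanE by blast
  moreover obtain s where "\<forall>i<n. s i \<in> R" "g = (\<Sum>i<n. s i * z i)"
    using assms(3) lspanE by blast
  ultimately show ?thesis using lspanI[of n "\<lambda>i. r i + s i" R z] sa_add[OF sa]
    by (simp add: distrib_right sum.distrib)
qed
lemma lspan_mult: assumes sa: "k_subalgebra R" and "f \<in> lspan R n z" "a \<in> R"
  shows "a * f \<in> lspan R n z"
proof -
  obtain r where "\<forall>i<n. r i \<in> R" "f = (\<Sum>i<n. r i * z i)"
    using assms(2) lspanE by blast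
  then show ?thesis using lspanI[of n "\<lambda>i. a * r i" R z] sa_mult[OF sa] assms(3)
    by (simp add: sum_distrib_left mult.assoc)
qed
lemma lspan_sum: assumes sa: "k_subalgebra R" shows "finite S \<Longrightarrow> (\<And>k. k \<in> S \<Longrightarrow> h k \<in> lspan R n z) \<Longrightarrow> (\<Sum>k\<in>S. h k) \<in> lspan R n z"
  by (induction S rule: finite_induct) (auto intro: lspan_add[OF sa] lspan_0[OF sa])

definition approx :: "'a::field fps set \<Rightarrow> nat \<Rightarrow> (nat \<Rightarrow> 'a fps) \<Rightarrow> nat \<Rightarrow> 'a fps \<Rightarrow> bool" where
  "approx R n z j f \<longleftrightarrow> (\<exists>g\<in>lspan R n z. lowz j (f - g))"

lemma approx_add: assumes sa: "k_subalgebra R" and "approx R n z j f" "approx R n z j g"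
  shows "approx R n z j (f + g)"
proof -
  obtain a b where "a \<in> lspan R n z" "lowz j (f - a)" "b \<in> lspan R n z" "lowz j (g - b)"
    using assms unfolding approx_def by blast
  moreover have "f + g - (a + b) = (f - a) + (g - b)" by simp
  ultimately show ?thesis unfolding approx_def using lspan_add[OF sa] lowz_add by metis
qed
lemma approx_sum: assumes sa: "k_subalgebra R" shows "finite S \<Longrightarrow> (\<And>k. k \<in> S \<Longrightarrow> approx R n z j (h k)) \<Longrightarrow> approx R n z j (\<Sum>k\<in>S. h k)"
proof (induction S rule: finite_induct)
  case empty then show ?case unfolding approx_def using lspan_0[OF sa] by force
next
  case (insert x F) then show ?case using approx_add[OF sa] by simp
qed

lemma nakayama:
  assumes sa: "k_subalgebra R" and cond: "\<forall>h. lowz C h \<longrightarrow> h \<in> R" and C1: "1 \<le> C"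
    and gen: "generates R (max_ideal R) n y"
    and ytR: "\<forall>i<n. yt i \<in> R"
    and e: "\<forall>i<n. y i - yt i \<in> ideal_sq (max_ideal R)"
  shows "max_ideal R \<subseteq> lspan R n yt"
proof -
  have gen2: "\<forall>f\<in>max_ideal R. \<exists>r. (\<forall>i<n. r i \<in> R) \<and> f = (\<Sum>i<n. r i * y i)"
    using gen unfolding generates_def by blast
  have ap: "\<forall>f\<in>max_ideal R. approx R n yt j f" for j
  proof (induction j)
    case 0 then show ?case unfolding approx_def using lspan_0[OF sa] by force
  next
    case (Suc j)
    show ?case
    proof
      fix f assume "f \<in> max_ideal R"
      then obtain r where r: "\<forall>i<n. r i \<in> R" "f = (\<Sum>i<n. r i * y i)" using gen2 by blast
      have "f = (\<Sum>i<n. r i * yt i) + (\<Sum>i<n. r i * (y i - yt i))"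
        unfolding r(2) by (simp add: sum.distrib[symmetric] algebra_simps)
      moreover have "approx R n yt (Suc j) (\<Sum>i<n. r i * yt i)"
        unfolding approx_def using lspanI[OF r(1)] by force
      moreover have "approx R n yt (Suc j) (\<Sum>i<n. r i * (y i - yt i))"
      proof (rule approx_sum[OF sa], simp)
        fix i assume i: "i \<in> {..<n}"
        obtain N :: nat and A B where AB: "\<forall>k<N. A k \<in> max_ideal R \<and> B k \<in> max_ideal R"
          "y i - yt i = (\<Sum>k<N. A k * B k)"
          using e i unfolding ideal_sq_def by blast
        have "r i * (y i - yt i) = (\<Sum>k<N. (r i * A k) * B k)"
          unfolding AB(2) sum_distrib_left by (simp only: mult.assoc)
        moreover have "approx R n yt (Suc j) (\<Sum>k<N. (r i * A k) * B k)"
        proof (rule approx_sum[OF sa], simp)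
          fix k assume k: "k \<in> {..<N}"
          then have Am: "A k \<in> max_ideal R" and Bm: "B k \<in> max_ideal R" using AB by auto
          obtain g where g: "g \<in> lspan R n yt" "lowz j (B k - g)"
            using Suc.IH Bm unfolding approx_def by blast
          have rA: "r i * A k \<in> R" "(r i * A k) $ 0 = 0"
            using Am r(1) i sa_mult[OF sa] by (auto simp: mi_iff)
          have "lowz (Suc j) ((r i * A k) * (B k - g))" by (rule lowz_mult1[OF rA(2) g(2)])
          moreover have "(r i * A k) * g \<in> lspan R n yt" by (rule lspan_mult[OF sa g(1) rA(1)])
          moreover have "(r i * A k) * B k - (r i * A k) * g = (r i * A k) * (B k - g)"
            by (simp add: algebra_simps)
          ultimately show "approx R n yt (Suc j) (r i * A k * B k)"
            unfolding approx_def by metis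
        qed
        ultimately show "approx R n yt (Suc j) (r i * (y i - yt i))" by simp
      qed
      ultimately show "approx R n yt (Suc j) f" using approx_add[OF sa] by metis
    qed
  qed
  have Xm: "(fps_X ^ (Suc C) :: 'a fps) \<in> max_ideal R" by (rule X_power_mi[OF cond C1]) simp
  obtain g where g: "g \<in> lspan R n yt" "lowz (Suc (Suc C)) (fps_X ^ Suc C - g)"
    using ap Xm unfolding approx_def by blast
  have "(fps_X ^ Suc C - g) $ Suc C = 0" using g(2) unfolding lowz_def by blast
  then have "g $ Suc C = 1" by (simp add: fps_X_power_iff)
  then have gnz: "g \<noteq> 0" by auto
  obtain r where r: "\<forall>i<n. r i \<in> R" "g = (\<Sum>i<n. r i * yt i)" using lspanE[OF g(1)] by blast
  have "\<exists>i<n. yt i \<noteq> 0"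
  proof (rule ccontr)
    assume "\<not> (\<exists>i<n. yt i \<noteq> 0)"
    then have "g = 0" unfolding r(2) by (intro sum.neutral) auto
    then show False using gnz by simp
  qed
  then obtain i0 where i0: "i0 < n" "yt i0 \<noteq> 0" by blast
  show ?thesis
  proof
    fix f assume fm: "f \<in> max_ideal R"
    obtain g where g: "g \<in> lspan R n yt" "lowz (subdegree (yt i0) + C) (f - g)"
      using ap fm unfolding approx_def by blast
    have "yt i0 dvd (f - g)" using lowz_dvd[OF i0(2)] lowz_mono[OF g(2)] by simp
    then obtain q where q: "f - g = yt i0 * q" by (elim dvdE)
    have "lowz C q"
    proof (cases "q = 0")
      case False
      have "f - g \<noteq> 0" using q False i0(2) by simp
      then have "subdegree (yt i0) + C \<le> subdegree (f - g)" using lowz_subdegree g(2) by blast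
      also have "\<dots> = subdegree (yt i0) + subdegree q" using q False i0(2) by simp
      finally show ?thesis by (intro subdegree_lowz) simp
    qed simp
    then have "q \<in> R" using cond by blast
    have "(\<Sum>i<n. (if i = i0 then q else 0) * yt i) = (\<Sum>i<n. if i = i0 then q * yt i else 0)"
      by (rule sum.cong) auto
    also have "\<dots> = q * yt i0" using i0(1) by simp
    finally have "(\<Sum>i<n. (if i = i0 then q else 0) * yt i) = q * yt i0" .
    moreover have "(\<Sum>i<n. (if i = i0 then q else 0) * yt i) \<in> lspan R n yt"
      using \<open>q \<in> R\<close> sa_0[OF sa] by (intro lspanI) auto
    ultimately have "q * yt i0 \<in> lspan R n yt" by simp
    then have "g + q * yt i0 \<in> lspan R n yt" using lspan_add[OF sa g(1)] by blast
    moreover have "f = g + q * yt i0" using q by (simp add: algebra_simps)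
    ultimately show "f \<in> lspan R n yt" by simp
  qed
qed



definition WW :: "nat \<Rightarrow> nat \<Rightarrow> nat list set" where
  "WW n j = {xs. set xs \<subseteq> {..<n} \<and> length xs = j}"
definition zw :: "(nat \<Rightarrow> 'a::field fps) \<Rightarrow> nat list \<Rightarrow> 'a fps" where
  "zw z w = prod_list (map z w)"
definition mon :: "nat \<Rightarrow> (nat \<Rightarrow> 'a::field fps) \<Rightarrow> (nat \<Rightarrow> nat) \<Rightarrow> 'a fps" where
  "mon n z \<alpha> = (\<Prod>i<n. z i ^ \<alpha> i)"
definition AA :: "nat \<Rightarrow> nat \<Rightarrow> (nat \<Rightarrow> nat) set" where
  "AA n m = {\<alpha>. (\<forall>i. n \<le> i \<longrightarrow> \<alpha> i = 0) \<and> (\<Sum>i<n. \<alpha> i) \<le> m}"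

lemma finite_WW: "finite (WW n j)"
  unfolding WW_def by (rule finite_lists_length_eq) simp

lemma WW_Suc: "WW n (Suc j) = (\<lambda>(xs, i). i # xs) ` (WW n j \<times> {..<n})"
  unfolding WW_def by (rule lists_length_Suc_eq)

lemma WW_0: "WW n 0 = {[]}" unfolding WW_def by auto

lemma finite_AA: "finite (AA n m)"
proof -
  have "AA n m \<subseteq> {\<alpha>. \<forall>x. (x \<in> {..<n} \<longrightarrow> \<alpha> x \<in> {..m}) \<and> (x \<notin> {..<n} \<longrightarrow> \<alpha> x = 0)}"
  proof (clarsimp simp: AA_def)
    fix \<alpha> x assume a: "\<forall>i. n \<le> i \<longrightarrow> \<alpha> i = 0" "sum \<alpha> {..<n} \<le> m" "x < n"
    have "\<alpha> x \<le> sum \<alpha> {..<n}" using a(3) by (intro member_le_sum) auto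
    then show "\<alpha> x \<le> m" using a(2) by simp
  qed
  then show ?thesis using finite_subset finite_set_of_finite_funs[of "{..<n}" "{..m}" 0] by blast
qed

lemma lowz_power: "(f::'a::field fps) $ 0 = 0 \<Longrightarrow> lowz k (f ^ k)"
  by (induction k) (auto intro: lowz_mult1)

lemma lowz_prod: "finite S \<Longrightarrow> (\<And>i. i \<in> S \<Longrightarrow> lowz (d i) (g i)) \<Longrightarrow> lowz (\<Sum>i\<in>S. d i) (\<Prod>i\<in>S. g i)"
  by (induction S rule: finite_induct) (auto intro: lowz_mult)

lemma lowz_mon: "(\<And>i. i < n \<Longrightarrow> z i $ 0 = 0) \<Longrightarrow> lowz (\<Sum>i<n. \<alpha> i) (mon n z \<alpha>)"
  unfolding mon_def by (intro lowz_prod) (auto intro: lowz_power)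

lemma psubst_nth: "psubst n z c $ m = (\<Sum>\<alpha>\<in>AA n m. c \<alpha> * mon n z \<alpha> $ m)"
  unfolding psubst_def AA_def mon_def by simp

lemma zw_Cons: "zw z (i # w) = z i * zw z w" unfolding zw_def by simp

lemma zw_mon: "set w \<subseteq> {..<n} \<Longrightarrow> zw z w = mon n z (\<lambda>i. count_list w i)"
proof (induction w)
  case Nil then show ?case by (simp add: zw_def mon_def)
next
  case (Cons a w)
  then have an: "a \<in> {..<n}" and IH: "zw z w = mon n z (\<lambda>i. count_list w i)" by auto
  have "mon n z (\<lambda>i. count_list (a # w) i) = z a ^ count_list (a # w) a * (\<Prod>i\<in>{..<n} - {a}. z i ^ count_list (a # w) i)"
    unfolding mon_def using an by (simp add: prod.remove)
  also have "\<dots> = z a * (z a ^ count_list w a * (\<Prod>i\<in>{..<n} - {a}. z i ^ count_list w i))"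
    by (simp add: mult.assoc)
  also have "z a ^ count_list w a * (\<Prod>i\<in>{..<n} - {a}. z i ^ count_list w i) = mon n z (\<lambda>i. count_list w i)"
    unfolding mon_def using an by (simp add: prod.remove)
  finally show ?case using IH by (simp add: zw_Cons)
qed

lemma step_lemma:
  assumes sa: "k_subalgebra R" and span: "max_ideal R \<subseteq> lspan R n z"
    and r: "\<forall>w\<in>WW n j. r w \<in> R"
  shows "\<exists>r'. (\<forall>w\<in>WW n (Suc j). r' w \<in> R) \<and>
     (\<Sum>w\<in>WW n j. (r w - fps_const (r w $ 0)) * zw z w) = (\<Sum>w\<in>WW n (Suc j). r' w * zw z w)"
proof -
  have "\<forall>w\<in>WW n j. \<exists>s. (\<forall>i<n. s i \<in> R) \<and> r w - fps_const (r w $ 0) = (\<Sum>i<n. s i * z i)"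
  proof
    fix w assume "w \<in> WW n j"
    then have "r w - fps_const (r w $ 0) \<in> max_ideal R"
      using r sa_diff[OF sa _ sa_const[OF sa]] by (simp add: mi_iff)
    then show "\<exists>s. (\<forall>i<n. s i \<in> R) \<and> r w - fps_const (r w $ 0) = (\<Sum>i<n. s i * z i)"
      using span lspanE by blast
  qed
  then obtain S where S: "\<forall>w\<in>WW n j. (\<forall>i<n. S w i \<in> R) \<and> r w - fps_const (r w $ 0) = (\<Sum>i<n. S w i * z i)"
    by (rule bchoice[elim_format]) blast
  define r' where "r' = (\<lambda>w'. S (tl w') (hd w'))"
  have "\<forall>w\<in>WW n (Suc j). r' w \<in> R"
    unfolding WW_Suc r'_def using S by auto
  moreover have "(\<Sum>w\<in>WW n (Suc j). r' w * zw z w) = (\<Sum>w\<in>WW n j. (r w - fps_const (r w $ 0)) * zw z w)"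
  proof -
    have "(\<Sum>w\<in>WW n (Suc j). r' w * zw z w) = (\<Sum>p\<in>WW n j \<times> {..<n}. r' (snd p # fst p) * zw z (snd p # fst p))"
      unfolding WW_Suc by (subst sum.reindex) (auto simp: inj_split_Cons case_prod_beta)
    also have "\<dots> = (\<Sum>w\<in>WW n j. \<Sum>i<n. S w i * (z i * zw z w))"
      unfolding r'_def by (simp add: zw_Cons sum.cartesian_product case_prod_beta)
    also have "\<dots> = (\<Sum>w\<in>WW n j. (\<Sum>i<n. S w i * z i) * zw z w)"
      by (simp add: sum_distrib_right mult.assoc)
    also have "\<dots> = (\<Sum>w\<in>WW n j. (r w - fps_const (r w $ 0)) * zw z w)"
      using S by (intro sum.cong) auto
    finally show ?thesis .
  qed
  ultimately show ?thesis by metis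
qed



lemma psubst_in_R:
  assumes sa: "k_subalgebra R" and cond: "\<forall>h. lowz C h \<longrightarrow> h \<in> R"
    and zR: "\<forall>i<n. z i \<in> R" and z0: "\<forall>i<n. z i $ 0 = 0"
  shows "psubst n z c \<in> R"
proof -
  define P where "P = (\<Sum>\<alpha>\<in>AA n C. fps_const (c \<alpha>) * mon n z \<alpha>)"
  have PR: "P \<in> R" unfolding P_def mon_def using zR
    by (intro sa_sum[OF sa] sa_mult[OF sa] sa_const[OF sa] sa_prod[OF sa] sa_power[OF sa]) auto
  have "(psubst n z c - P) $ m = 0" if m: "m < C" for m
  proof -
    have "psubst n z c $ m = (\<Sum>\<alpha>\<in>AA n m. c \<alpha> * mon n z \<alpha> $ m)" by (rule psubst_nth)
    also have "\<dots> = (\<Sum>\<alpha>\<in>AA n C. c \<alpha> * mon n z \<alpha> $ m)"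
    proof (rule sum.mono_neutral_left)
      show "finite (AA n C)" by (rule finite_AA)
      show "AA n m \<subseteq> AA n C" using m unfolding AA_def by auto
      show "\<forall>\<alpha>\<in>AA n C - AA n m. c \<alpha> * mon n z \<alpha> $ m = 0"
      proof
        fix \<alpha> assume "\<alpha> \<in> AA n C - AA n m"
        then have "m < (\<Sum>i<n. \<alpha> i)" unfolding AA_def by auto
        moreover have "lowz (\<Sum>i<n. \<alpha> i) (mon n z \<alpha>)" using z0 by (intro lowz_mon) auto
        ultimately show "c \<alpha> * mon n z \<alpha> $ m = 0" unfolding lowz_def by simp
      qed
    qed
    also have "\<dots> = P $ m" unfolding P_def by (simp add: fps_sum_nth)
    finally show ?thesis by simp
  qed
  then have "lowz C (psubst n z c - P)" unfolding lowz_def by blast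
  then have "psubst n z c - P \<in> R" using cond by blast
  then have "P + (psubst n z c - P) \<in> R" using sa_add[OF sa PR] by blast
  then show ?thesis by simp
qed

lemma lemmaA:
  assumes sa: "k_subalgebra R" and span: "max_ideal R \<subseteq> lspan R n z"
    and z0: "\<forall>i<n. z i $ 0 = 0" and fR: "f \<in> R"
  shows "\<exists>c. psubst n z c = f"
proof -
  define P where "P j r r' \<longleftrightarrow> (\<forall>w\<in>WW n (Suc j). r' w \<in> R) \<and>
     (\<Sum>w\<in>WW n j. (r w - fps_const (r w $ 0)) * zw z w) = (\<Sum>w\<in>WW n (Suc j). r' w * zw z w)"
    for j and r r' :: "nat list \<Rightarrow> 'a fps"
  define fam where "fam = rec_nat (\<lambda>w. f) (\<lambda>j r. SOME r'. P j r r')"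
  have fam0: "fam 0 = (\<lambda>w. f)" and famS: "\<And>j. fam (Suc j) = (SOME r'. P j (fam j) r')"
    by (simp_all add: fam_def)
  have inv: "(\<forall>w\<in>WW n j. fam j w \<in> R) \<and>
     f = (\<Sum>i<j. \<Sum>w\<in>WW n i. fps_const (fam i w $ 0) * zw z w) + (\<Sum>w\<in>WW n j. fam j w * zw z w)" for j
  proof (induction j)
    case 0 then show ?case using fR by (simp add: WW_0 fam0 zw_def)
  next
    case (Suc j)
    then have R: "\<forall>w\<in>WW n j. fam j w \<in> R" and eq: "f = (\<Sum>i<j. \<Sum>w\<in>WW n i. fps_const (fam i w $ 0) * zw z w) + (\<Sum>w\<in>WW n j. fam j w * zw z w)"
      by auto
    have "\<exists>r'. P j (fam j) r'" unfolding P_def using step_lemma[OF sa span R] .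
    then have Pj: "P j (fam j) (fam (Suc j))" unfolding famS by (rule someI_ex)
    have "(\<Sum>w\<in>WW n j. fam j w * zw z w) = (\<Sum>w\<in>WW n j. fps_const (fam j w $ 0) * zw z w) +
        (\<Sum>w\<in>WW n j. (fam j w - fps_const (fam j w $ 0)) * zw z w)"
      by (simp add: sum.distrib[symmetric] algebra_simps)
    also have "(\<Sum>w\<in>WW n j. (fam j w - fps_const (fam j w $ 0)) * zw z w) = (\<Sum>w\<in>WW n (Suc j). fam (Suc j) w * zw z w)"
      using Pj unfolding P_def by blast
    finally have "f = (\<Sum>i<Suc j. \<Sum>w\<in>WW n i. fps_const (fam i w $ 0) * zw z w) + (\<Sum>w\<in>WW n (Suc j). fam (Suc j) w * zw z w)"
      using eq by (simp add: add.assoc)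
    then show ?case using Pj unfolding P_def by blast
  qed
  define a where "a w = fam (length w) w $ 0" for w
  define c where "c \<alpha> = (\<Sum>w\<in>{w. set w \<subseteq> {..<n} \<and> length w = (\<Sum>i<n. \<alpha> i) \<and> (\<lambda>i. count_list w i) = \<alpha>}. a w)" for \<alpha>
  have "psubst n z c $ m = f $ m" for m
  proof -
    define L where "L = {w. set w \<subseteq> {..<n} \<and> length w \<le> m}"
    have finL: "finite L" unfolding L_def by (rule finite_lists_length_le) simp
    have lzw: "lowz (length w) (zw z w)" if "set w \<subseteq> {..<n}" for w
      unfolding zw_def using z0 that by (intro lowz_prod_list) auto
    have inv': "f = (\<Sum>i<Suc m. \<Sum>w\<in>WW n i. fps_const (fam i w $ 0) * zw z w) + (\<Sum>w\<in>WW n (Suc m). fam (Suc m) w * zw z w)"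
      using inv by blast
    have "lowz (0 + Suc m) (fam (Suc m) w * zw z w)" if "w \<in> WW n (Suc m)" for w
    proof -
      have sw: "set w \<subseteq> {..<n}" "length w = Suc m" using that unfolding WW_def by auto
      have "lowz (Suc m) (zw z w)" using lzw[OF sw(1)] sw(2) by simp
      then show ?thesis by (rule lowz_mult[OF lowz_zero])
    qed
    then have "lowz (0 + Suc m) (\<Sum>w\<in>WW n (Suc m). fam (Suc m) w * zw z w)"
      using finite_WW by (intro lowz_sum) auto
    then have "(\<Sum>w\<in>WW n (Suc m). fam (Suc m) w * zw z w) $ m = 0" unfolding lowz_def by simp
    then have "f $ m = (\<Sum>i<Suc m. \<Sum>w\<in>WW n i. fam i w $ 0 * zw z w $ m)"
      by (subst inv') (simp only: fps_add_nth fps_sum_nth fps_mult_left_const_nth add_0_right)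
    also have "\<dots> = (\<Sum>i<Suc m. \<Sum>w\<in>WW n i. a w * zw z w $ m)"
      by (intro sum.cong refl) (simp add: a_def WW_def)
    also have "\<dots> = (\<Sum>w\<in>L. a w * zw z w $ m)"
    proof -
      have "(\<Sum>i<Suc m. \<Sum>w\<in>WW n i. a w * zw z w $ m) = (\<Sum>i\<in>{..<Suc m}. \<Sum>w\<in>{x\<in>L. length x = i}. a w * zw z w $ m)"
        by (intro sum.cong refl) (auto simp: WW_def L_def)
      also have "\<dots> = (\<Sum>w\<in>L. a w * zw z w $ m)"
        by (rule sum.group[OF finL]) (auto simp: L_def)
      finally show ?thesis .
    qed
    also have "\<dots> = (\<Sum>\<alpha>\<in>AA n m. \<Sum>w\<in>{x\<in>L. (\<lambda>i. count_list x i) = \<alpha>}. a w * zw z w $ m)"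
    proof (rule sum.group[OF finL finite_AA, symmetric])
      show "(\<lambda>x i. count_list x i) ` L \<subseteq> AA n m"
      proof (clarsimp simp: AA_def L_def)
        fix x assume x: "set x \<subseteq> {..<n}" "length x \<le> m"
        have "(\<Sum>i<n. count_list x i) = length x" using x(1) by (intro sum_count_set) auto
        then show "(\<forall>i. n \<le> i \<longrightarrow> count_list x i = 0) \<and> (\<Sum>i<n. count_list x i) \<le> m"
          using x by (auto intro!: count_notin)
      qed
    qed
    also have "\<dots> = (\<Sum>\<alpha>\<in>AA n m. c \<alpha> * mon n z \<alpha> $ m)"
    proof (rule sum.cong[OF refl])
      fix \<alpha> assume "\<alpha> \<in> AA n m"
      then have am: "(\<Sum>i<n. \<alpha> i) \<le> m" unfolding AA_def by auto
      have setq: "{x\<in>L. (\<lambda>i. count_list x i) = \<alpha>} = {w. set w \<subseteq> {..<n} \<and> length w = (\<Sum>i<n. \<alpha> i) \<and> (\<lambda>i. count_list w i) = \<alpha>}"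
      proof (intro set_eqI iffI)
        fix x assume x: "x \<in> {x\<in>L. (\<lambda>i. count_list x i) = \<alpha>}"
        then have "set x \<subseteq> {..<n}" unfolding L_def by auto
        then have "(\<Sum>i<n. count_list x i) = length x" by (intro sum_count_set) auto
        then show "x \<in> {w. set w \<subseteq> {..<n} \<and> length w = (\<Sum>i<n. \<alpha> i) \<and> (\<lambda>i. count_list w i) = \<alpha>}"
          using x unfolding L_def by auto
      next
        fix x assume "x \<in> {w. set w \<subseteq> {..<n} \<and> length w = (\<Sum>i<n. \<alpha> i) \<and> (\<lambda>i. count_list w i) = \<alpha>}"
        then show "x \<in> {x\<in>L. (\<lambda>i. count_list x i) = \<alpha>}" using am unfolding L_def by auto
      qed
      have "(\<Sum>w\<in>{x\<in>L. (\<lambda>i. count_list x i) = \<alpha>}. a w * zw z w $ m) =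
            (\<Sum>w\<in>{x\<in>L. (\<lambda>i. count_list x i) = \<alpha>}. a w * mon n z \<alpha> $ m)"
      proof (rule sum.cong[OF refl])
        fix w assume "w \<in> {x\<in>L. (\<lambda>i. count_list x i) = \<alpha>}"
        then have "set w \<subseteq> {..<n}" "(\<lambda>i. count_list w i) = \<alpha>" unfolding L_def by auto
        then show "a w * zw z w $ m = a w * mon n z \<alpha> $ m" using zw_mon by metis
      qed
      also have "\<dots> = c \<alpha> * mon n z \<alpha> $ m"
        unfolding c_def setq by (simp add: sum_distrib_right)
      finally show "(\<Sum>w\<in>{x\<in>L. (\<lambda>i. count_list x i) = \<alpha>}. a w * zw z w $ m) = c \<alpha> * mon n z \<alpha> $ m" .
    qed
    also have "\<dots> = psubst n z c $ m" by (rule psubst_nth[symmetric])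
    finally show ?thesis by simp
  qed
  then show ?thesis by (intro exI[of _ c] fps_ext)
qed



theorem mainTheorem14:
  fixes R :: "'a::field fps set"
    and n :: nat and y yt :: "nat \<Rightarrow> 'a fps"
  assumes "k_subalgebra R"
    and "fps_finite_over R"
    and "fps_birational R"
    and "minimal_generators R (max_ideal R) n y"
    and "\<forall>i<n. yt i \<in> R"
    and "\<forall>i<n. y i = yt i \<or> Max (HK_set R) + 1 \<le> subdegree (y i - yt i)"
  shows "R = power_series_subalg n yt"
proof -
  note sa = assms(1)
  obtain C0 where C0: "\<forall>h. lowz C0 h \<longrightarrow> h \<in> R" using conductor[OF assms(1-3)] by blast
  define C where "C = Suc C0"
  have cond: "\<forall>h. lowz C h \<longrightarrow> h \<in> R" using C0 lowz_mono unfolding C_def by fastforce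
  have C1: "1 \<le> C" unfolding C_def by simp
  have gen: "generates R (max_ideal R) n y" using assms(4) unfolding minimal_generators_def by blast
  have ym: "\<forall>i<n. y i \<in> max_ideal R" using gen unfolding generates_def by blast
  have finHK: "finite (HK_set R)" using HK_bound[OF sa cond C1] finite_subset by blast
  have nHK: "\<forall>v. Max (HK_set R) + 1 \<le> v \<longrightarrow> v \<notin> HK_set R"
    using finHK Max_ge by fastforce
  have yt0: "\<forall>i<n. yt i $ 0 = 0"
  proof (intro allI impI)
    fix i assume i: "i < n"
    show "yt i $ 0 = 0"
    proof (cases "y i = yt i")
      case True then show ?thesis using ym i by (metis mi_iff)
    next
      case False
      then have "1 \<le> subdegree (y i - yt i)" using assms(6) i by fastforce
      then have "(y i - yt i) $ 0 = 0" by (intro nth_less_subdegree_zero) simp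
      then show ?thesis using ym i by (simp add: mi_iff)
    qed
  qed
  have e: "\<forall>i<n. y i - yt i \<in> ideal_sq (max_ideal R)"
  proof (intro allI impI)
    fix i assume i: "i < n"
    show "y i - yt i \<in> ideal_sq (max_ideal R)"
    proof (cases "y i = yt i")
      case True then show ?thesis by (simp add: isq_0)
    next
      case False
      then have sd: "Max (HK_set R) + 1 \<le> subdegree (y i - yt i)" using assms(6) i by fastforce
      have "yt i \<in> max_ideal R" using assms(5) yt0 i by (simp add: mi_iff)
      then have "y i - yt i \<in> max_ideal R" using mi_diff[OF sa] ym i by blast
      moreover have "lowz (Max (HK_set R) + 1) (y i - yt i)" by (rule subdegree_lowz[OF sd])
      ultimately show ?thesis using HK_isq[OF sa cond C1 nHK] by blast
    qed
  qed
  have span: "max_ideal R \<subseteq> lspan R n yt" by (rule nakayama[OF sa cond C1 gen assms(5) e])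
  show ?thesis
  proof
    show "R \<subseteq> power_series_subalg n yt"
    proof
      fix f assume "f \<in> R"
      then obtain c where "psubst n yt c = f" using lemmaA[OF sa span yt0] by blast
      then show "f \<in> power_series_subalg n yt" unfolding power_series_subalg_def by blast
    qed
  next
    show "power_series_subalg n yt \<subseteq> R"
      unfolding power_series_subalg_def using psubst_in_R[OF sa cond assms(5) yt0] by blast
  qed
qed


end
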